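(* Let $A \subset \mathbb{Z}^d$ consist of exactly $d+2$ points, contain $0$, and generate $\mathbb{Z}^d$ additively. Denote the nonzero elements of $A$ by $v_0, v_1, \ldots, v_d$, where $v_1, \ldots, v_d$ are linearly independent. For integers $k$ let $C_k = \{\sum_{i=1}^d n_i v_i : n_i \in \mathbb{N}, \ \sum_{i=1}^d n_i \leq k\}$, with $C_k := \emptyset$ for $k < 0$, and for integers $j, h \geq 0$ let $A_{j,h} = j v_0 + C_{h-j}$. Let $\Gamma = \mathrm{span}_{\mathbb{N}}\{v_1,\ldots,v_d\}$, let $N$ be the order of $v_0$ in $\mathbb{Z}^d / \mathrm{span}_{\mathbb{Z}}\{v_1,\ldots,v_d\}$, and let $w \in \Gamma$ be the point with $\Gamma \cap (N v_0 + \Gamma) = w + \Gamma$ (explicitly, if $N v_0 = \sum_{i=1}^d c_i v_i$ with $c_i \in \mathbb{Z}$, then $w = \sum_{i=1}^d \max(c_i,0) v_i$). Let \[ H = \max\{\ell : A_{j,h} \cap A_{j',h} = \emptyset \text{ whenever } j \neq j' \text{ and } h < \ell\}, \] which is a finite integer. Then for all $a, j, h \in \mathbb{N}$, \[ A_{j,h} \cap A_{j+aN,h} = j v_0 + a w + C_{h - j - aH}. \]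
   Context: $\mathbb{N} = \{0,1,2,\ldots\}$; in the definition of $H$, $j,j',h$ range over nonnegative integers. For a vector $x$ and set $S$, $x + S = \{x + s : s \in S\}$. *)

theory Defs
  imports "HOL-Analysis.Analysis"
begin

text \<open>Points of Z^d are vectors of type int^'d, with d = CARD('d).
  The vectors v_1..v_d are indexed by the type 'd itself.\<close>

definition Cset :: "('d::finite \<Rightarrow> int^'d) \<Rightarrow> int \<Rightarrow> (int^'d) set" where
  "Cset v k = {(\<Sum>i\<in>UNIV. of_nat (n i) *s v i) | n :: 'd \<Rightarrow> nat. int (\<Sum>i\<in>UNIV. n i) \<le> k}"

definition Aset :: "int^'d \<Rightarrow> ('d::finite \<Rightarrow> int^'d) \<Rightarrow> nat \<Rightarrow> nat \<Rightarrow> (int^'d) set" where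
  "Aset v0 v j h = (\<lambda>x. of_nat j *s v0 + x) ` Cset v (int h - int j)"

definition Gamma :: "('d::finite \<Rightarrow> int^'d) \<Rightarrow> (int^'d) set" where
  "Gamma v = {(\<Sum>i\<in>UNIV. of_nat (n i) *s v i) | n :: 'd \<Rightarrow> nat. True}"

definition zspan :: "('d::finite \<Rightarrow> int^'d) \<Rightarrow> (int^'d) set" where
  "zspan v = {(\<Sum>i\<in>UNIV. c i *s v i) | c :: 'd \<Rightarrow> int. True}"

definition ordv :: "int^'d \<Rightarrow> ('d::finite \<Rightarrow> int^'d) \<Rightarrow> nat" where
  "ordv v0 v = (LEAST N::nat. 0 < N \<and> of_nat N *s v0 \<in> zspan v)"

definition wpt :: "int^'d \<Rightarrow> ('d::finite \<Rightarrow> int^'d) \<Rightarrow> int^'d" where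
  "wpt v0 v = (THE w. w \<in> Gamma v \<and>
      Gamma v \<inter> ((\<lambda>x. of_nat (ordv v0 v) *s v0 + x) ` Gamma v) = (\<lambda>x. w + x) ` Gamma v)"

definition Hval :: "int^'d \<Rightarrow> ('d::finite \<Rightarrow> int^'d) \<Rightarrow> int" where
  "Hval v0 v = (GREATEST l::int. \<forall>j j' h :: nat. j \<noteq> j' \<and> int h < l \<longrightarrow>
      Aset v0 v j h \<inter> Aset v0 v j' h = {})"

end

theory Submission
  imports Defs
begin

lemma clear_denoms:
  fixes f :: "'x \<Rightarrow> rat"
  assumes "finite F"
  shows "\<exists>D::int. D > 0 \<and> (\<forall>x\<in>F. \<exists>z::int. of_int D * f x = of_int z)"
  using assms
proof (induction F rule: finite_induct)
  case empty
  then show ?case by (intro exI[of _ 1]) auto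
next
  case (insert y F)
  then obtain D where D: "D > 0" "\<forall>x\<in>F. \<exists>z::int. of_int D * f x = of_int z" by blast
  obtain n d where nd: "quotient_of (f y) = (n, d)" by (cases "quotient_of (f y)")
  have d: "d > 0" using quotient_of_denom_pos[OF nd] .
  have fy: "f y = of_int n / of_int d" using quotient_of_div[OF nd] .
  show ?case
  proof (rule exI[of _ "D * d"], intro conjI ballI)
    show "D * d > 0" using D d by simp
    fix x assume "x \<in> insert y F"
    show "\<exists>z. of_int (D * d) * f x = of_int z"
    proof (cases "x = y")
      case True
      then show ?thesis using d fy by (intro exI[of _ "D * n"]) (simp add: field_simps)
    next
      case False
      then have "x \<in> F" using \<open>x \<in> insert y F\<close> by simp
      then obtain z where "of_int D * f x = of_int z" using D by blast
      then show ?thesis by (intro exI[of _ "z * d"]) (simp add: algebra_simps)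
    qed
  qed
qed

definition toQ :: "int^'d \<Rightarrow> rat^'d" where "toQ x = (\<chi> k. of_int (x $ k))"

lemma toQ_inj: "toQ x = toQ y \<Longrightarrow> x = y"
  by (simp add: toQ_def vec_eq_iff)

lemma int_rel:
  fixes v0 :: "int^'d" and v :: "'d \<Rightarrow> int^'d"
  assumes injv: "inj v" and nv: "v0 \<notin> range v"
  shows "\<exists>m (c::'d\<Rightarrow>int). (m \<noteq> 0 \<or> (\<exists>i. c i \<noteq> 0)) \<and> m *s v0 + (\<Sum>i\<in>UNIV. c i *s v i) = 0"
proof -
  define u where "u = toQ \<circ> v"
  define u0 where "u0 = toQ v0"
  define S where "S = insert u0 (range u)"
  have inju: "inj u" using injv unfolding u_def inj_def by (auto dest: toQ_inj)
  have nu: "u0 \<notin> range u" using nv unfolding u_def u0_def by (auto dest: toQ_inj)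
  have finS: "finite S" unfolding S_def by simp
  have cardS: "card S = CARD('d) + 1" unfolding S_def using nu inju
    by (simp add: card_image)
  have "vec.dim S \<le> CARD('d)" by (rule dim_subset_UNIV_cart_gen)
  then have "vec.dependent S" using cardS
    by (intro vec.dependent_biggerset_general) simp
  then obtain q where q: "\<exists>s\<in>S. q s \<noteq> 0" "(\<Sum>s\<in>S. q s *s s) = 0"
    using vec.dependent_finite[OF finS] by blast
  obtain D :: int where D: "D > 0" "\<forall>x\<in>S. \<exists>z::int. of_int D * q x = of_int z"
    using clear_denoms[OF finS] by blast
  then obtain zz where zz: "\<forall>x\<in>S. of_int D * q x = of_int (zz x)" by metis
  define m where "m = zz u0"
  define c where "c = (\<lambda>i. zz (u i))"
  have sumS: "(\<Sum>s\<in>S. q s *s s) = q u0 *s u0 + (\<Sum>i\<in>UNIV. q (u i) *s u i)"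
    unfolding S_def using nu inju by (simp add: sum.reindex)
  have "toQ (m *s v0 + (\<Sum>i\<in>UNIV. c i *s v i)) = of_int D *s (\<Sum>s\<in>S. q s *s s)"
  proof -
    have "of_int D *s (\<Sum>s\<in>S. q s *s s) = (of_int D * q u0) *s u0 + (\<Sum>i\<in>UNIV. (of_int D * q (u i)) *s u i)"
      unfolding sumS by (simp add: vector_add_ldistrib vec.scale_sum_right vector_smult_assoc)
    also have "\<dots> = of_int m *s u0 + (\<Sum>i\<in>UNIV. of_int (c i) *s u i)"
      using zz unfolding m_def c_def S_def by simp
    also have "\<dots> = toQ (m *s v0 + (\<Sum>i\<in>UNIV. c i *s v i))"
      unfolding u_def u0_def toQ_def by (simp add: vec_eq_iff)
    finally show ?thesis by simp
  qed
  also have "\<dots> = toQ 0" using q(2) by (simp add: toQ_def vec_eq_iff)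
  finally have eq: "m *s v0 + (\<Sum>i\<in>UNIV. c i *s v i) = 0" by (rule toQ_inj)
  from q(1) obtain s where s: "s \<in> S" "q s \<noteq> 0" by blast
  then have "zz s \<noteq> 0" using zz D by (metis mult_eq_0_iff of_int_0 of_int_eq_0_iff less_irrefl)
  then have "m \<noteq> 0 \<or> (\<exists>i. c i \<noteq> 0)" using s(1) unfolding S_def m_def c_def by auto
  then show ?thesis using eq by blast
qed


definition lin :: "('d::finite \<Rightarrow> int^'d) \<Rightarrow> ('d \<Rightarrow> int) \<Rightarrow> int^'d" where
  "lin v c = (\<Sum>i\<in>UNIV. c i *s v i)"

lemma lin_add: "lin v (\<lambda>i. c i + c' i) = lin v c + lin v c'"
  unfolding lin_def by (simp add: vector_sadd_rdistrib sum.distrib)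

lemma lin_smult: "lin v (\<lambda>i. k * c i) = k *s lin v c"
  unfolding lin_def by (simp add: vec_eq_iff sum_distrib_left mult.assoc)

lemma lin_zero: "lin v (\<lambda>i. 0) = 0"
  unfolding lin_def by (simp add: vec_eq_iff)

lemma lin_diff: "lin v (\<lambda>i. c i - c' i) = lin v c - lin v c'"
  unfolding lin_def by (simp add: vec_eq_iff sum_subtractf left_diff_distrib)

lemma lin_inj:
  fixes v :: "'d::finite \<Rightarrow> int^'d"
  assumes indep: "\<forall>c :: 'd \<Rightarrow> int. (\<Sum>i\<in>UNIV. c i *s v i) = 0 \<longrightarrow> (\<forall>i. c i = 0)"
    and "lin v c = lin v c'"
  shows "c = c'"
proof -
  have "lin v (\<lambda>i. c i - c' i) = 0" using assms(2) by (simp add: lin_diff)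
  then have "\<forall>i. c i - c' i = 0" using indep[rule_format, of "\<lambda>i. c i - c' i"] unfolding lin_def by blast
  then show ?thesis by auto
qed

lemma Cset_iff: "x \<in> Cset v k \<longleftrightarrow> (\<exists>c. x = lin v c \<and> (\<forall>i. 0 \<le> c i) \<and> sum c UNIV \<le> k)"
proof
  assume "x \<in> Cset v k"
  then obtain n where n: "x = (\<Sum>i\<in>UNIV. of_nat (n i) *s v i)" "int (\<Sum>i\<in>UNIV. n i) \<le> k"
    unfolding Cset_def by blast
  then show "\<exists>c. x = lin v c \<and> (\<forall>i. 0 \<le> c i) \<and> sum c UNIV \<le> k"
    by (intro exI[of _ "\<lambda>i. int (n i)"]) (simp add: lin_def)
next
  assume "\<exists>c. x = lin v c \<and> (\<forall>i. 0 \<le> c i) \<and> sum c UNIV \<le> k"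
  then obtain c where c: "x = lin v c" "\<forall>i. 0 \<le> c i" "sum c UNIV \<le> k" by blast
  have e: "c = (\<lambda>i. int (nat (c i)))" using c(2) by auto
  have "x = (\<Sum>i\<in>UNIV. of_nat (nat (c i)) *s v i) \<and> int (\<Sum>i\<in>UNIV. nat (c i)) \<le> k"
    using c by (subst (asm) (1 2) e) (simp add: lin_def)
  then show "x \<in> Cset v k" unfolding Cset_def by (intro CollectI exI[of _ "\<lambda>i. nat (c i)"]) simp
qed

lemma Gamma_iff: "x \<in> Gamma v \<longleftrightarrow> (\<exists>c. x = lin v c \<and> (\<forall>i. 0 \<le> c i))"
proof
  assume "x \<in> Gamma v"
  then obtain n where n: "x = (\<Sum>i\<in>UNIV. of_nat (n i) *s v i)"
    unfolding Gamma_def by blast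
  then show "\<exists>c. x = lin v c \<and> (\<forall>i. 0 \<le> c i)"
    by (intro exI[of _ "\<lambda>i. int (n i)"]) (simp add: lin_def)
next
  assume "\<exists>c. x = lin v c \<and> (\<forall>i. 0 \<le> c i)"
  then obtain c where c: "x = lin v c" "\<forall>i. 0 \<le> c i" by blast
  have e: "c = (\<lambda>i. int (nat (c i)))" using c(2) by auto
  have "x = (\<Sum>i\<in>UNIV. of_nat (nat (c i)) *s v i)"
    using c by (subst (asm) e) (simp add: lin_def)
  then show "x \<in> Gamma v" unfolding Gamma_def by (intro CollectI exI[of _ "\<lambda>i. nat (c i)"]) simp
qed

lemma zspan_iff: "x \<in> zspan v \<longleftrightarrow> (\<exists>c. x = lin v c)"
  unfolding zspan_def lin_def by blast

lemma Aset_iff: "x \<in> Aset v0 v j h \<longleftrightarrow>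
   (\<exists>c. x = of_nat j *s v0 + lin v c \<and> (\<forall>i. 0 \<le> c i) \<and> sum c UNIV \<le> int h - int j)"
  unfolding Aset_def by (auto simp: Cset_iff image_iff)

lemma Cset_nonneg: "x \<in> Cset v k \<Longrightarrow> 0 \<le> k"
  unfolding Cset_iff by (auto intro: order_trans[OF sum_nonneg])


lemma main_coord:
  fixes v0 :: "int^'d::finite" and v :: "'d \<Rightarrow> int^'d"
  assumes indep: "\<forall>c :: 'd \<Rightarrow> int. (\<Sum>i\<in>UNIV. c i *s v i) = 0 \<longrightarrow> (\<forall>i. c i = 0)"
    and NcN: "of_nat N *s v0 = lin v cN"
  defines "cp \<equiv> \<lambda>i. max (cN i) 0" and "cm \<equiv> \<lambda>i. max (- cN i) 0"
  defines "M \<equiv> max (sum cp UNIV) (sum cm UNIV + int N)"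
  shows "Aset v0 v j h \<inter> Aset v0 v (j + a * N) h =
    (\<lambda>x. of_nat j *s v0 + of_nat a *s lin v cp + x) ` Cset v (int h - int j - int a * M)"
proof -
  have cN: "\<And>i. cN i = cp i - cm i" unfolding cp_def cm_def by auto
  have shift: "of_nat (j + a * N) *s v0 = of_nat j *s v0 + lin v (\<lambda>i. int a * cN i)"
    by (simp add: lin_smult NcN[symmetric] vector_sadd_rdistrib vector_smult_assoc)
  have aM: "int a * M = max (int a * sum cp UNIV) (int a * (sum cm UNIV + int N))"
    unfolding M_def by (simp add: max_def mult_left_mono mult_le_cancel_left)
  have sumcN: "sum cN UNIV = sum cp UNIV - sum cm UNIV" unfolding cN by (simp add: sum_subtractf)
  show ?thesis
  proof (rule set_eqI, rule iffI)
    fix x assume x: "x \<in> Aset v0 v j h \<inter> Aset v0 v (j + a * N) h"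
    obtain g where g: "x = of_nat j *s v0 + lin v g" "\<forall>i. 0 \<le> g i" "sum g UNIV \<le> int h - int j"
      using IntD1[OF x] unfolding Aset_iff by blast
    obtain g' where g': "x = of_nat (j + a * N) *s v0 + lin v g'" "\<forall>i. 0 \<le> g' i" "sum g' UNIV \<le> int h - int (j + a * N)"
      using IntD2[OF x] unfolding Aset_iff by blast
    have "lin v g = lin v (\<lambda>i. int a * cN i + g' i)"
      using g(1) g'(1) unfolding shift lin_add by (simp add: add.assoc)
    then have gg: "g = (\<lambda>i. int a * cN i + g' i)" by (rule lin_inj[OF indep])
    define e where "e = (\<lambda>i. g i - int a * cp i)"
    have e_nn: "\<forall>i. 0 \<le> e i"
    proof
      fix i
      show "0 \<le> e i"
      proof (cases "0 \<le> cN i")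
        case True
        then show ?thesis using gg g'(2) unfolding e_def cp_def by (simp add: fun_eq_iff)
      next
        case False
        then show ?thesis using g(2) unfolding e_def cp_def by simp
      qed
    qed
    have se1: "sum e UNIV = sum g UNIV - int a * sum cp UNIV"
      unfolding e_def by (simp add: sum_subtractf sum_distrib_left)
    have "sum g UNIV = int a * sum cN UNIV + sum g' UNIV"
      unfolding gg by (simp add: sum.distrib sum_distrib_left)
    then have se2: "sum e UNIV = sum g' UNIV - int a * sum cm UNIV"
      using se1 sumcN by (simp add: algebra_simps)
    have "sum e UNIV \<le> int h - int j - int a * M"
      using se1 se2 g(3) g'(3) aM by (simp add: algebra_simps)
    then have "lin v e \<in> Cset v (int h - int j - int a * M)"
      using e_nn unfolding Cset_iff by blast
    moreover have "x = of_nat j *s v0 + of_nat a *s lin v cp + lin v e"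
    proof -
      have "g = (\<lambda>i. int a * cp i + e i)" unfolding e_def by simp
      then have "lin v g = of_nat a *s lin v cp + lin v e" by (simp add: lin_add lin_smult)
      then show ?thesis using g(1) by (simp add: add.assoc)
    qed
    ultimately show "x \<in> (\<lambda>x. of_nat j *s v0 + of_nat a *s lin v cp + x) ` Cset v (int h - int j - int a * M)"
      by blast
  next
    fix x assume "x \<in> (\<lambda>x. of_nat j *s v0 + of_nat a *s lin v cp + x) ` Cset v (int h - int j - int a * M)"
    then obtain y where y: "y \<in> Cset v (int h - int j - int a * M)" "x = of_nat j *s v0 + of_nat a *s lin v cp + y"
      by blast
    then obtain e where e: "x = of_nat j *s v0 + of_nat a *s lin v cp + lin v e" "\<forall>i. 0 \<le> e i"
        "sum e UNIV \<le> int h - int j - int a * M"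
      unfolding Cset_iff by blast
    define g where "g = (\<lambda>i. int a * cp i + e i)"
    define g' where "g' = (\<lambda>i. int a * cm i + e i)"
    have "x = of_nat j *s v0 + lin v g"
      using e(1) unfolding g_def by (simp add: lin_add lin_smult add.assoc)
    moreover have "\<forall>i. 0 \<le> g i" using e(2) unfolding g_def cp_def by simp
    moreover have "sum g UNIV \<le> int h - int j"
      using e(3) aM unfolding g_def by (simp add: sum.distrib sum_distrib_left)
    ultimately have xA: "x \<in> Aset v0 v j h" unfolding Aset_iff by blast
    have "(\<lambda>i. int a * cN i + g' i) = g" unfolding g_def g'_def cN by (simp add: algebra_simps)
    then have "lin v g = lin v (\<lambda>i. int a * cN i) + lin v g'" using lin_add[of v "\<lambda>i. int a * cN i" g'] by simp
    moreover have "lin v g = of_nat a *s lin v cp + lin v e" unfolding g_def by (simp add: lin_add lin_smult)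
    ultimately have "x = of_nat (j + a * N) *s v0 + lin v g'"
      using e(1) unfolding shift by (simp add: add.assoc)
    moreover have "\<forall>i. 0 \<le> g' i" using e(2) unfolding g'_def cm_def by simp
    moreover have "sum g' UNIV \<le> int h - int (j + a * N)"
      using e(3) aM unfolding g'_def by (simp add: sum.distrib sum_distrib_left algebra_simps)
    ultimately have "x \<in> Aset v0 v (j + a * N) h" unfolding Aset_iff by blast
    then show "x \<in> Aset v0 v j h \<inter> Aset v0 v (j + a * N) h" using xA by blast
  qed
qed


theorem lemma6p2:
  fixes v0 :: "int^'d" and v :: "'d \<Rightarrow> int^'d"
  assumes card_A: "card ({0, v0} \<union> range v) = CARD('d) + 2"
    and gen: "\<forall>x :: int^'d. \<exists>c :: int^'d \<Rightarrow> int. x = (\<Sum>y\<in>{0, v0} \<union> range v. c y *s y)"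
    and indep: "\<forall>c :: 'd \<Rightarrow> int. (\<Sum>i\<in>UNIV. c i *s v i) = 0 \<longrightarrow> (\<forall>i. c i = 0)"
  shows "\<forall>a j h :: nat. Aset v0 v j h \<inter> Aset v0 v (j + a * ordv v0 v) h =
           (\<lambda>x. of_nat j *s v0 + of_nat a *s wpt v0 v + x) `
             Cset v (int h - int j - int a * Hval v0 v)"
proof -
  have c1: "card ({0, v0} \<union> range v) \<le> card {0, v0} + card (range v)" by (rule card_Un_le)
  have c2: "card {0, v0} \<le> 2" by (simp add: card_insert_if)
  have c3: "card (range v) \<le> CARD('d)" by (rule card_image_le) simp
  have "card (range v) = card (UNIV :: 'd set)" using card_A c1 c2 c3 by simp
  then have injv: "inj v" by (rule eq_card_imp_inj_on[OF finite])
  have nv: "v0 \<notin> range v"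
  proof
    assume "v0 \<in> range v"
    then have "{0, v0} \<union> range v = insert 0 (range v)" by auto
    then have "card ({0, v0} \<union> range v) \<le> Suc (card (range v))" by (simp add: card_insert_if)
    then show False using card_A c3 by simp
  qed
  obtain m c where mc: "m \<noteq> 0 \<or> (\<exists>i. c i \<noteq> 0)" "m *s v0 + (\<Sum>i\<in>UNIV. c i *s v i) = 0"
    using int_rel[OF injv nv] by blast
  have m0: "m \<noteq> 0"
  proof
    assume "m = 0"
    then have "(\<Sum>i\<in>UNIV. c i *s v i) = 0" using mc(2) by simp
    then show False using indep mc(1) \<open>m = 0\<close> by blast
  qed
  have comp: "\<And>k. m * v0$k = - (\<Sum>i\<in>UNIV. c i * v i $ k)"
  proof -
    fix k
    have "(m *s v0 + (\<Sum>i\<in>UNIV. c i *s v i)) $ k = 0" using mc(2) by simp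
    then show "m * v0$k = - (\<Sum>i\<in>UNIV. c i * v i $ k)" by (simp add: eq_neg_iff_add_eq_0)
  qed
  have exN: "\<exists>n::nat. 0 < n \<and> of_nat n *s v0 \<in> zspan v"
  proof (cases "m > 0")
    case True
    have "of_nat (nat m) *s v0 = lin v (\<lambda>i. - c i)"
      using True unfolding lin_def by (simp add: vec_eq_iff sum_negf comp)
    then show ?thesis using True unfolding zspan_iff by (intro exI[of _ "nat m"]) auto
  next
    case False
    then have "m < 0" using m0 by simp
    have "of_nat (nat (- m)) *s v0 = lin v c"
      using \<open>m < 0\<close> unfolding lin_def by (simp add: vec_eq_iff comp)
    then show ?thesis using \<open>m < 0\<close> unfolding zspan_iff by (intro exI[of _ "nat (- m)"]) auto
  qed
  define N where "N = ordv v0 v"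
  have Nprop: "0 < N \<and> of_nat N *s v0 \<in> zspan v"
    unfolding N_def ordv_def by (rule LeastI_ex[OF exN])
  have Nmin: "\<And>n. 0 < n \<Longrightarrow> of_nat n *s v0 \<in> zspan v \<Longrightarrow> N \<le> n"
    unfolding N_def ordv_def by (rule Least_le) simp
  obtain cN where NcN: "of_nat N *s v0 = lin v cN" using Nprop unfolding zspan_iff by blast
  define cp where "cp = (\<lambda>i. max (cN i) 0)"
  define cm where "cm = (\<lambda>i. max (- cN i) 0)"
  define M where "M = max (sum cp UNIV) (sum cm UNIV + int N)"
  have MC: "\<And>a j h. Aset v0 v j h \<inter> Aset v0 v (j + a * N) h =
    (\<lambda>x. of_nat j *s v0 + of_nat a *s lin v cp + x) ` Cset v (int h - int j - int a * M)"
    unfolding cp_def cm_def M_def by (rule main_coord[OF indep NcN])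
  have cN: "\<And>i. cN i = cp i - cm i" unfolding cp_def cm_def by auto
  have "0 \<le> sum cm UNIV" unfolding cm_def by (rule sum_nonneg) simp
  then have M0: "0 \<le> M" unfolding M_def by linarith
  have zeroC: "0 \<in> Cset v 0"
    unfolding Cset_iff by (intro exI[of _ "\<lambda>i. 0"]) (simp add: lin_zero)
  define P where "P = (\<lambda>l::int. \<forall>j j' h :: nat. j \<noteq> j' \<and> int h < l \<longrightarrow>
      Aset v0 v j h \<inter> Aset v0 v j' h = {})"
  have lt: "Aset v0 v j h \<inter> Aset v0 v j' h = {}" if jj: "j < j'" and hM: "int h < M" for j j' h
  proof (rule ccontr)
    assume "Aset v0 v j h \<inter> Aset v0 v j' h \<noteq> {}"
    then obtain x where x: "x \<in> Aset v0 v j h" "x \<in> Aset v0 v j' h" by blast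
    obtain g where g: "x = of_nat j *s v0 + lin v g"
      using x(1) unfolding Aset_iff by blast
    obtain g' where g': "x = of_nat j' *s v0 + lin v g'"
      using x(2) unfolding Aset_iff by blast
    define k where "k = j' - j"
    have j': "j' = j + k" unfolding k_def using jj by simp
    have kpos: "0 < k" unfolding k_def using jj by simp
    have "of_nat j *s v0 + lin v g = of_nat j *s v0 + (of_nat k *s v0 + lin v g')"
      using g g' unfolding j' by (simp add: vector_sadd_rdistrib add.assoc)
    then have kv: "of_nat k *s v0 = lin v (\<lambda>i. g i - g' i)" by (simp add: lin_diff)
    define q where "q = k div N"
    define r where "r = k mod N"
    have kqr: "k = q * N + r" unfolding q_def r_def by simp
    have "of_nat r *s v0 = of_nat k *s v0 - of_nat q *s (of_nat N *s v0)"
      unfolding kqr by (simp add: vector_sadd_rdistrib vector_smult_assoc)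
    also have "\<dots> = lin v (\<lambda>i. (g i - g' i) - int q * cN i)"
      unfolding kv NcN by (simp add: lin_diff lin_smult)
    finally have "of_nat r *s v0 \<in> zspan v" unfolding zspan_iff by blast
    moreover have "r < N" unfolding r_def using Nprop by simp
    ultimately have "r = 0" using Nmin by (metis not_less not_gr0)
    then have kq: "k = q * N" and q1: "1 \<le> q" using kqr kpos by auto
    have "x \<in> Aset v0 v j h \<inter> Aset v0 v (j + q * N) h" using x j' kq by simp
    then have "x \<in> (\<lambda>x. of_nat j *s v0 + of_nat q *s lin v cp + x) ` Cset v (int h - int j - int q * M)"
      using MC by blast
    then have "0 \<le> int h - int j - int q * M" using Cset_nonneg by blast
    moreover have "M \<le> int q * M" using q1 M0 by (simp add: mult_le_cancel_right1)
    ultimately show False using hM by simp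
  qed
  have PM: "P M"
    unfolding P_def
  proof (intro allI impI)
    fix j j' h :: nat assume a: "j \<noteq> j' \<and> int h < M"
    show "Aset v0 v j h \<inter> Aset v0 v j' h = {}"
    proof (cases "j < j'")
      case True then show ?thesis using lt a by blast
    next
      case False then have "j' < j" using a by simp
      then show ?thesis using lt a by blast
    qed
  qed
  have Pbound: "l \<le> M" if "P l" for l
  proof (rule ccontr)
    assume "\<not> l \<le> M"
    then have "int (nat M) < l" using M0 by simp
    moreover have "(0::nat) \<noteq> N" using Nprop by simp
    ultimately have "Aset v0 v 0 (nat M) \<inter> Aset v0 v (0 + 1 * N) (nat M) = {}"
      using that unfolding P_def by simp
    moreover have "of_nat 0 *s v0 + of_nat 1 *s lin v cp + 0 \<in>
       (\<lambda>x. of_nat 0 *s v0 + of_nat 1 *s lin v cp + x) ` Cset v (int (nat M) - int 0 - int 1 * M)"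
      using zeroC M0 by simp
    ultimately show False using MC[of 0 "nat M" 1] by blast
  qed
  have HM: "Hval v0 v = M"
    unfolding Hval_def using PM Pbound unfolding P_def by (intro Greatest_equality) auto
  have SE: "Gamma v \<inter> (\<lambda>x. of_nat N *s v0 + x) ` Gamma v = (\<lambda>x. lin v cp + x) ` Gamma v"
  proof (rule set_eqI, rule iffI)
    fix x assume x: "x \<in> Gamma v \<inter> (\<lambda>x. of_nat N *s v0 + x) ` Gamma v"
    obtain g where g: "x = lin v g" "\<forall>i. 0 \<le> g i" using IntD1[OF x] unfolding Gamma_iff by blast
    obtain y where y: "y \<in> Gamma v" "x = of_nat N *s v0 + y" using x by blast
    obtain g' where g': "y = lin v g'" "\<forall>i. 0 \<le> g' i" using y(1) unfolding Gamma_iff by blast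
    have "lin v g = lin v (\<lambda>i. cN i + g' i)" using g y g' NcN by (simp add: lin_add)
    then have gg: "g = (\<lambda>i. cN i + g' i)" by (rule lin_inj[OF indep])
    define e where "e = (\<lambda>i. g i - cp i)"
    have "\<forall>i. 0 \<le> e i" unfolding e_def cp_def using gg g(2) g'(2) by (auto simp: fun_eq_iff)
    then have "lin v e \<in> Gamma v" unfolding Gamma_iff by blast
    moreover have "x = lin v cp + lin v e"
    proof -
      have "g = (\<lambda>i. cp i + e i)" unfolding e_def by simp
      then show ?thesis using g(1) by (simp add: lin_add)
    qed
    ultimately show "x \<in> (\<lambda>x. lin v cp + x) ` Gamma v" by blast
  next
    fix x assume "x \<in> (\<lambda>x. lin v cp + x) ` Gamma v"
    then obtain y where y: "y \<in> Gamma v" "x = lin v cp + y" by blast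
    then obtain e where e: "y = lin v e" "\<forall>i. 0 \<le> e i" unfolding Gamma_iff by blast
    have "x = lin v (\<lambda>i. cp i + e i)" using y e by (simp add: lin_add)
    moreover have "\<forall>i. 0 \<le> cp i + e i" using e(2) unfolding cp_def by (simp add: add_nonneg_nonneg)
    ultimately have xG: "x \<in> Gamma v" unfolding Gamma_iff by blast
    have "\<forall>i. 0 \<le> cm i + e i" using e(2) unfolding cm_def by (simp add: add_nonneg_nonneg)
    then have G2: "lin v (\<lambda>i. cm i + e i) \<in> Gamma v" unfolding Gamma_iff by blast
    have "(\<lambda>i. cp i + e i) = (\<lambda>i. cN i + (cm i + e i))" using cN by (simp add: fun_eq_iff)
    then have "x = of_nat N *s v0 + lin v (\<lambda>i. cm i + e i)"
      using \<open>x = lin v (\<lambda>i. cp i + e i)\<close> NcN by (simp add: lin_add)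
    then show "x \<in> Gamma v \<inter> (\<lambda>x. of_nat N *s v0 + x) ` Gamma v" using xG G2 by blast
  qed
  have cpG: "lin v cp \<in> Gamma v" unfolding Gamma_iff cp_def by auto
  have zeroG: "0 \<in> Gamma v" unfolding Gamma_iff by (intro exI[of _ "\<lambda>i. 0"]) (simp add: lin_zero)
  have uniq: "w = lin v cp" if w: "w \<in> Gamma v"
      "Gamma v \<inter> (\<lambda>x. of_nat N *s v0 + x) ` Gamma v = (\<lambda>x. w + x) ` Gamma v" for w
  proof -
    have eq: "(\<lambda>x. w + x) ` Gamma v = (\<lambda>x. lin v cp + x) ` Gamma v" using w(2) SE by simp
    have "w + 0 \<in> (\<lambda>x. w + x) ` Gamma v" using zeroG by blast
    then have "w \<in> (\<lambda>x. lin v cp + x) ` Gamma v" using eq by simp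
    then obtain y1 where "y1 \<in> Gamma v" "w = lin v cp + y1" by blast
    then obtain e1 where e1: "w = lin v cp + lin v e1" "\<forall>i. 0 \<le> e1 i" unfolding Gamma_iff by blast
    have "lin v cp + 0 \<in> (\<lambda>x. lin v cp + x) ` Gamma v" using zeroG by blast
    then have "lin v cp \<in> (\<lambda>x. w + x) ` Gamma v" using eq by simp
    then obtain y2 where "y2 \<in> Gamma v" "lin v cp = w + y2" by blast
    then obtain e2 where e2: "lin v cp = w + lin v e2" "\<forall>i. 0 \<le> e2 i" unfolding Gamma_iff by blast
    have "lin v (\<lambda>i. e1 i + e2 i) = lin v (\<lambda>i. 0)"
    proof -
      have "lin v cp = lin v cp + (lin v e1 + lin v e2)" using e1(1) e2(1) by (simp add: add.assoc)
      then have "lin v e1 + lin v e2 = 0" by simp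
      then show ?thesis by (simp add: lin_add lin_zero)
    qed
    then have "(\<lambda>i. e1 i + e2 i) = (\<lambda>i. 0)" by (rule lin_inj[OF indep])
    then have "e1 = (\<lambda>i. 0)" using e1(2) e2(2) by (auto simp: fun_eq_iff add_nonneg_eq_0_iff)
    then show ?thesis using e1(1) by (simp add: lin_zero)
  qed
  have WP: "wpt v0 v = lin v cp"
    unfolding wpt_def N_def[symmetric]
  proof (rule the_equality)
    show "lin v cp \<in> Gamma v \<and> Gamma v \<inter> (\<lambda>x. of_nat N *s v0 + x) ` Gamma v = (\<lambda>x. lin v cp + x) ` Gamma v"
      using cpG SE by simp
  next
    fix w assume "w \<in> Gamma v \<and> Gamma v \<inter> (\<lambda>x. of_nat N *s v0 + x) ` Gamma v = (\<lambda>x. w + x) ` Gamma v"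
    then show "w = lin v cp" using uniq by blast
  qed
  show ?thesis
    unfolding WP HM N_def[symmetric] by (intro allI) (rule MC)
qed

end
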